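(* Let $\{\gamma_k\}$ and $\{\lambda_k\}$ be positive non-increasing sequences, let $r<1$, and let $\{\bar x_N\}$ be generated by the IR-IG method. Let $M_h,M$ be scalars with $|h(x)|\le M_h$ and $\|x\|\le M$ for all $x\in X$. Then for all $N\ge1$, $$f(\bar x_N)-f^*\le\Big(\sum_{k=0}^{N-1}\gamma_k^r\Big)^{-1}\Big(m\sum_{k=0}^{N-1}\gamma_k^{r+1}(C_f^2+\lambda_k^2C_h^2)+m^2C_f\sum_{k=0}^{N-1}\gamma_k^{r+1}(C_f+\lambda_kC_h)+2M_h\sum_{k=0}^{N-1}\gamma_k^r\lambda_k+2M^2\gamma_{N-1}^{r-1}\Big).$$
   Context: Standing setup: $X\subset\mathbb{R}^n$ is nonempty, compact and convex. $f_1,\dots,f_m:\mathbb{R}^n\to\mathbb{R}$ are convex (possibly nondifferentiable) functions and $f=\sum_{i=1}^m f_i$. $h:\mathbb{R}^n\to\mathbb{R}$ is strongly convex with parameter $\mu_h>0$ (possibly nondifferentiable). Let $f^*=\min_{x\in X}f(x)$. $C_f,C_h$ are constants such that $\|g\|\le C_f$ for every $g\in\partial f_i(x)$, $i=1,\dots,m$, $x\in X$, and $\|g\|\le C_h$ for every $g\in\partial h(x)$, $x\in X$. $\mathcal{P}_X$ denotes Euclidean projection onto $X$. IR-IG method: given $x_0\in X$, positive sequences $\{\gamma_k\}$, $\{\lambda_k\}$ and a constant $r<1$, for each $k\ge0$ set $x_{k,0}=x_k$; for $i=0,\dots,m-1$ pick any $g_{f_{i+1}}(x_{k,i})\in\partial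 f_{i+1}(x_{k,i})$ and $g_h(x_{k,i})\in\partial h(x_{k,i})$ and set $x_{k,i+1}=\mathcal{P}_X\big(x_{k,i}-\gamma_k\big(g_{f_{i+1}}(x_{k,i})+\tfrac{\lambda_k}{m}g_h(x_{k,i})\big)\big)$; then set $x_{k+1}=x_{k,m}$. The averaged iterates are $\bar x_N=\sum_{k=0}^{N-1}\gamma_k^r x_k\big/\sum_{k=0}^{N-1}\gamma_k^r$ for $N\ge1$. *)

theory Defs
  imports "HOL-Analysis.Analysis"
begin

definition subdiff :: "('a::real_inner \<Rightarrow> real) \<Rightarrow> 'a \<Rightarrow> 'a set" where
  "subdiff f x = {g. \<forall>y. f y \<ge> f x + inner g (y - x)}"

definition strongly_convex :: "real \<Rightarrow> ('a::real_normed_vector \<Rightarrow> real) \<Rightarrow> bool" where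
  "strongly_convex mu h \<longleftrightarrow> (\<forall>x y t. 0 \<le> t \<and> t \<le> 1 \<longrightarrow>
     h (t *\<^sub>R x + (1 - t) *\<^sub>R y) \<le> t * h x + (1 - t) * h y - mu / 2 * t * (1 - t) * (norm (x - y))\<^sup>2)"

end

theory Submission
  imports Defs
begin

lemma subgrad_exists:
  fixes f :: "'a::euclidean_space \<Rightarrow> real"
  assumes cf: "convex_on UNIV f"
  shows "\<exists>g. g \<in> subdiff f x0"
proof -
  let ?S = "{p :: 'a \<times> real. fst p = x0 \<and> snd p < f x0}"
  let ?T = "epigraph UNIV f"
  have cS: "convex ?S"
    unfolding convex_def by (auto simp: convex_bound_lt scaleR_left_distrib[symmetric])
  have cT: "convex ?T" using convex_epigraphI[OF cf] .
  have ne1: "?S \<noteq> {}" proof - have "(x0, f x0 - 1) \<in> ?S" by simp thus ?thesis by blast qed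
  have ne2: "?T \<noteq> {}" by (auto simp: epigraph_def intro!: exI[of _ "(x0, f x0)"])
  have dj: "?S \<inter> ?T = {}" by (auto simp: epigraph_def)
  obtain w b where w: "w \<noteq> 0" and wS: "\<forall>p\<in>?S. inner w p \<le> b" and wT: "\<forall>p\<in>?T. inner w p \<ge> b"
    using separating_hyperplane_sets[OF cS cT ne1 ne2 dj] by blast
  obtain a c where wac: "w = (a, c)" by (cases w)
  have T': "\<And>x t. f x \<le> t \<Longrightarrow> inner a x + c * t \<ge> b"
    using wT wac by (auto simp: epigraph_def)
  have S': "\<And>t. t < f x0 \<Longrightarrow> inner a x0 + c * t \<le> b"
    using wS wac by auto
  have c0: "c > 0"
  proof (rule ccontr)
    assume "\<not> c > 0"
    have 1: "inner a x0 + c * (f x0 - 1) \<le> b" using S' by simp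
    have 2: "inner a x0 + c * f x0 \<ge> b" using T' by simp
    from 1 2 have "c \<ge> 0" by (simp add: algebra_simps)
    with \<open>\<not> c > 0\<close> have "c = 0" by simp
    hence an: "a \<noteq> 0" using w wac by (auto simp: zero_prod_def)
    have 3: "inner a (x0 - a) \<ge> b" using T'[of "x0 - a" "f (x0 - a)"] \<open>c = 0\<close> by simp
    have "inner a x0 \<le> b" using 1 \<open>c = 0\<close> by simp
    with 3 have "inner a a \<le> 0" by (simp add: inner_diff_right)
    with an show False by (simp add: inner_gt_zero_iff[symmetric] not_le[symmetric])
  qed
  have key: "inner a x0 + c * f x0 \<le> b"
  proof (rule ccontr)
    assume nk: "\<not> inner a x0 + c * f x0 \<le> b"
    define d where "d = inner a x0 + c * f x0 - b"
    have d: "d > 0" using nk d_def by simp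
    have "inner a x0 + c * (f x0 - d / (2*c)) \<le> b" using S' d c0 by simp
    moreover have "c * (f x0 - d / (2*c)) = c * f x0 - d/2" using c0 by (simp add: field_simps)
    ultimately show False using d d_def by linarith
  qed
  have "(- (1/c)) *\<^sub>R a \<in> subdiff f x0"
    unfolding subdiff_def
  proof (safe)
    fix y
    have "inner a y + c * f y \<ge> inner a x0 + c * f x0" using T'[of y "f y"] key by simp
    hence "c * f y \<ge> c * f x0 - inner a (y - x0)" by (simp add: inner_diff_right)
    hence "f y \<ge> f x0 - inner a (y - x0) / c" using c0 by (simp add: field_simps)
    thus "f x0 + inner ((- (1/c)) *\<^sub>R a) (y - x0) \<le> f y" by simp
  qed
  thus ?thesis by blast
qed

lemma lip_bound:
  fixes f :: "'a::euclidean_space \<Rightarrow> real"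
  assumes cf: "convex_on UNIV f" and C: "\<And>g. g \<in> subdiff f y \<Longrightarrow> norm g \<le> C"
  shows "f y - f z \<le> C * norm (y - z)"
proof -
  obtain g where g: "g \<in> subdiff f y" using subgrad_exists[OF cf] by blast
  have "f z \<ge> f y + inner g (z - y)" using g by (simp add: subdiff_def)
  moreover have "- inner g (z - y) \<le> norm g * norm (z - y)"
    using Cauchy_Schwarz_ineq2[of g "z - y"] by linarith
  moreover have "norm g * norm (z - y) \<le> C * norm (y - z)"
    using C[OF g] by (simp add: norm_minus_commute mult_right_mono)
  ultimately show ?thesis by linarith
qed

lemma norm_sq_step:
  fixes a d :: "'a::real_inner"
  shows "(norm (a - g *\<^sub>R d))\<^sup>2 = (norm a)\<^sup>2 - 2 * g * inner d a + g\<^sup>2 * (norm d)\<^sup>2"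
  by (simp only: power2_norm_eq_inner) (simp add: inner_diff_left inner_diff_right inner_commute algebra_simps power2_eq_square)

lemma tele_bound:
  fixes a D :: "nat \<Rightarrow> real"
  assumes D: "\<And>k. 0 \<le> D k" "\<And>k. D k \<le> B" and a: "\<And>k. a k \<le> a (Suc k)" "\<And>k. 0 \<le> a k"
    and n: "n \<ge> 1"
  shows "(\<Sum>k<n. a k * (D k - D (Suc k))) \<le> a (n - 1) * B"
proof -
  have "(\<Sum>k<n. a k * (D k - D (Suc k))) + a (n - 1) * D n \<le> a (n - 1) * B" if "n \<ge> 1" for n
    using that
  proof (induction n rule: dec_induct)
    case base
    have "a 0 * D 0 \<le> a 0 * B" using D a by (simp add: mult_left_mono)
    then show ?case by (simp add: algebra_simps)
  next
    case (step n)
    have "(\<Sum>k<Suc n. a k * (D k - D (Suc k))) + a (Suc n - 1) * D (Suc n)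
        = (\<Sum>k<n. a k * (D k - D (Suc k))) + a (n - 1) * D n + (a n - a (n - 1)) * D n"
      by (simp add: algebra_simps)
    also have "\<dots> \<le> a (n - 1) * B + (a n - a (n - 1)) * B"
    proof -
      have "a (n - 1) \<le> a n" using a(1)[of "n - 1"] step(1) by simp
      hence "(a n - a (n - 1)) * D n \<le> (a n - a (n - 1)) * B" using D by (simp add: mult_left_mono)
      thus ?thesis using step.IH by linarith
    qed
    also have "\<dots> = a (Suc n - 1) * B" by (simp add: algebra_simps)
    finally show ?case .
  qed
  from this[OF n] have "(\<Sum>k<n. a k * (D k - D (Suc k))) \<le> a (n - 1) * B - a (n - 1) * D n" by linarith
  moreover have "a (n - 1) * D n \<ge> 0" using a D by simp
  ultimately show ?thesis by linarith
qed

lemma sum_shift1: "(\<Sum>i<n. F (Suc i) (y::'a)) = (\<Sum>i=1..n. F i y)"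
  by (induction n) (auto simp: atLeastAtMostSuc_conv add.commute)

lemma convex_on_sum_fun:
  assumes "\<And>i. i \<in> {1..(m::nat)} \<Longrightarrow> convex_on UNIV (F i :: 'a::real_vector \<Rightarrow> real)"
  shows "convex_on UNIV (\<lambda>y. \<Sum>i=1..m. F i y)"
  using assms
proof (induction m)
  case 0 then show ?case by (simp add: convex_on_const)
next
  case (Suc m)
  have "convex_on UNIV (\<lambda>y. (\<Sum>i=1..m. F i y) + F (Suc m) y)"
    using Suc by (intro convex_on_add) auto
  thus ?case by (simp add: atLeastAtMostSuc_conv add.commute)
qed

theorem lemma6:
  fixes X :: "'a::euclidean_space set"
    and fs :: "nat \<Rightarrow> 'a \<Rightarrow> real" and h :: "'a \<Rightarrow> real"
    and m :: nat and mu_h Cf Ch Mh M r :: real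
    and gamma lambda :: "nat \<Rightarrow> real"
    and x :: "nat \<Rightarrow> 'a" and xi :: "nat \<Rightarrow> nat \<Rightarrow> 'a"
    and gf gh :: "nat \<Rightarrow> nat \<Rightarrow> 'a"
    and N :: nat
  assumes X: "X \<noteq> {}" "compact X" "convex X"
    and m: "m \<ge> 1"
    and fs_convex: "\<And>i. i \<in> {1..m} \<Longrightarrow> convex_on UNIV (fs i)"
    and h_sc: "mu_h > 0" "strongly_convex mu_h h"
    and Cf: "\<And>i y g. i \<in> {1..m} \<Longrightarrow> y \<in> X \<Longrightarrow> g \<in> subdiff (fs i) y \<Longrightarrow> norm g \<le> Cf"
    and Ch: "\<And>y g. y \<in> X \<Longrightarrow> g \<in> subdiff h y \<Longrightarrow> norm g \<le> Ch"
    and gamma: "\<And>k. gamma k > 0" "decseq gamma"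
    and lambda: "\<And>k. lambda k > 0" "decseq lambda"
    and r: "r < 1"
    and x0: "x 0 \<in> X"
    and xi0: "\<And>k. xi k 0 = x k"
    and gf: "\<And>k i. i < m \<Longrightarrow> gf k i \<in> subdiff (fs (Suc i)) (xi k i)"
    and gh: "\<And>k i. i < m \<Longrightarrow> gh k i \<in> subdiff h (xi k i)"
    and step: "\<And>k i. i < m \<Longrightarrow> xi k (Suc i) =
       closest_point X (xi k i - gamma k *\<^sub>R (gf k i + (lambda k / real m) *\<^sub>R gh k i))"
    and next_iter: "\<And>k. x (Suc k) = xi k m"
    and Mh: "\<And>y. y \<in> X \<Longrightarrow> \<bar>h y\<bar> \<le> Mh"
    and M: "\<And>y. y \<in> X \<Longrightarrow> norm y \<le> M"
    and N: "N \<ge> 1"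
  shows "(let f = (\<lambda>y. \<Sum>i=1..m. fs i y);
              fstar = (INF y\<in>X. f y);
              S = (\<Sum>k<N. gamma k powr r);
              xbar = (\<Sum>k<N. gamma k powr r *\<^sub>R x k) /\<^sub>R S
          in f xbar - fstar \<le> (1 / S) *
             (real m * (\<Sum>k<N. gamma k powr (r + 1) * (Cf\<^sup>2 + (lambda k)\<^sup>2 * Ch\<^sup>2))
              + (real m)\<^sup>2 * Cf * (\<Sum>k<N. gamma k powr (r + 1) * (Cf + lambda k * Ch))
              + 2 * Mh * (\<Sum>k<N. gamma k powr r * lambda k)
              + 2 * M\<^sup>2 * gamma (N - 1) powr (r - 1)))"
proof -
  define f where "f = (\<lambda>y. \<Sum>i=1..m. fs i y)"
  define S where "S = (\<Sum>k<N. gamma k powr r)"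
  define a where "a = (\<lambda>k. gamma k powr (r - 1))"
  define Q where "Q = (\<lambda>k. real m * (Cf\<^sup>2 + (lambda k)\<^sup>2 * Ch\<^sup>2) + (real m)\<^sup>2 * Cf * (Cf + lambda k * Ch))"
  define R where "R = real m * (\<Sum>k<N. gamma k powr (r + 1) * (Cf\<^sup>2 + (lambda k)\<^sup>2 * Ch\<^sup>2))
              + (real m)\<^sup>2 * Cf * (\<Sum>k<N. gamma k powr (r + 1) * (Cf + lambda k * Ch))
              + 2 * Mh * (\<Sum>k<N. gamma k powr r * lambda k)
              + 2 * M\<^sup>2 * gamma (N - 1) powr (r - 1)"
  have clX: "closed X" using X(2) compact_imp_closed by blast
  have Pin: "\<And>v. closest_point X v \<in> X" using closest_point_in_set[OF clX X(1)] .
  have Pne: "\<And>v z. z \<in> X \<Longrightarrow> norm (closest_point X v - z) \<le> norm (v - z)"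
    using closest_point_lipschitz[OF X(3) clX X(1)] closest_point_self
    by (metis dist_norm)
  have m0: "0 < m" using m by simp
  have xiX: "xi k i \<in> X" if "x k \<in> X" "i \<le> m" for k i
    using that(2)
  proof (induction i)
    case 0 then show ?case using that(1) xi0 by simp
  next
    case (Suc i) then show ?case using step[of i k] Pin by simp
  qed
  have xX: "x k \<in> X" for k
  proof (induction k)
    case 0 then show ?case using x0 .
  next
    case (Suc k) then show ?case using xiX[of k m] next_iter by simp
  qed
  have xiX': "\<And>k i. i \<le> m \<Longrightarrow> xi k i \<in> X" using xiX xX by blast
  have Cf0: "Cf \<ge> 0" using Cf[of 1 "xi 0 0" "gf 0 0"] gf[of 0 0] m0 xiX'[of 0 0] m
    by (metis atLeastAtMost_iff le0 norm_ge_zero order_trans One_nat_def le_refl)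
  have Ch0: "Ch \<ge> 0" using Ch[of "xi 0 0" "gh 0 0"] gh[of 0 0] m0 xiX'[of 0 0]
    by (meson le0 norm_ge_zero order_trans)
  have Mh0: "Mh \<ge> 0" using Mh[OF x0] by linarith
  have M0: "M \<ge> 0" using M[OF x0] by (meson norm_ge_zero order_trans)
  have lipf: "fs i y - fs i z \<le> Cf * norm (y - z)" if "i \<in> {1..m}" "y \<in> X" for i y z
    by (rule lip_bound[OF fs_convex[OF that(1)]]) (use Cf that in blast)
  have Dbound: "(norm (y - z))\<^sup>2 \<le> 4 * M\<^sup>2" if "y \<in> X" "z \<in> X" for y z
  proof -
    have "norm (y - z) \<le> 2 * M" using norm_triangle_ineq4[of y z] M[OF that(1)] M[OF that(2)] by linarith
    hence "(norm (y - z))\<^sup>2 \<le> (2 * M)\<^sup>2" by (intro power_mono) auto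
    thus ?thesis by (simp add: power_mult_distrib)
  qed
  have perk: "gamma k powr r * (f (x k) - f z) \<le> a k * ((norm (x k - z))\<^sup>2 - (norm (x (Suc k) - z))\<^sup>2) / 2
       + gamma k powr (r + 1) * Q k + 2 * Mh * (gamma k powr r * lambda k)" if zX: "z \<in> X" for k z
  proof -
    define g where "g = gamma k"
    define l where "l = lambda k"
    define d where "d = (\<lambda>i. gf k i + (l / real m) *\<^sub>R gh k i)"
    define E where "E = Cf + l * Ch / real m"
    define T where "T = 2 * g\<^sup>2 * Cf * E * real m + 4 * g * l * Mh / real m + g\<^sup>2 * E\<^sup>2"
    have g0: "g > 0" using gamma(1) g_def by simp
    have l0: "l > 0" using lambda(1) l_def by simp
    have lm0: "l / real m \<ge> 0" using l0 by simp
    have E0: "E \<ge> 0" using Cf0 Ch0 l0 E_def by simp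
    have dn: "norm (d i) \<le> E" if "i < m" for i
    proof -
      have "norm (d i) \<le> norm (gf k i) + (l / real m) * norm (gh k i)"
        unfolding d_def using norm_triangle_ineq[of "gf k i" "(l / real m) *\<^sub>R gh k i"] l0 by (simp add: abs_of_nonneg)
      also have "\<dots> \<le> Cf + (l / real m) * Ch"
        using Cf[of "Suc i" "xi k i" "gf k i"] gf[OF that] Ch[of "xi k i" "gh k i"] gh[OF that]
          xiX'[of i k] that lm0 by (intro add_mono mult_left_mono) auto
      finally show ?thesis unfolding E_def by simp
    qed
    have xstep: "xi k (Suc i) = closest_point X (xi k i - g *\<^sub>R d i)" if "i < m" for i
      using step[OF that] unfolding d_def g_def l_def by simp
    have dist: "norm (xi k i - x k) \<le> real i * g * E" if "i \<le> m" for i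
      using that
    proof (induction i)
      case 0 then show ?case using xi0 by simp
    next
      case (Suc i)
      have "norm (xi k (Suc i) - x k) \<le> norm (xi k i - g *\<^sub>R d i - x k)"
        using xstep[of i] Suc.prems Pne[OF xX] by simp
      also have "\<dots> \<le> norm (xi k i - x k) + g * norm (d i)"
        using norm_triangle_ineq4[of "xi k i - x k" "g *\<^sub>R d i"] g0 by (simp add: algebra_simps)
      also have "\<dots> \<le> real i * g * E + g * E"
        using Suc dn[of i] g0 by (intro add_mono mult_left_mono) auto
      finally show ?case by (simp add: algebra_simps)
    qed
    have onestep: "(norm (xi k (Suc i) - z))\<^sup>2 \<le> (norm (xi k i - z))\<^sup>2
        - 2 * g * (fs (Suc i) (x k) - fs (Suc i) z) + T" if im: "i < m" for i
    proof -
      have xik: "xi k i \<in> X" using xiX' im by simp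
      have A: "inner (gf k i) (xi k i - z) \<ge> fs (Suc i) (xi k i) - fs (Suc i) z"
        using gf[of i k, OF im] unfolding subdiff_def
        by (auto dest!: spec[of _ z] simp: inner_diff_right)
      have B: "inner (gh k i) (xi k i - z) \<ge> h (xi k i) - h z"
        using gh[of i k, OF im] unfolding subdiff_def
        by (auto dest!: spec[of _ z] simp: inner_diff_right)
      have B2: "h (xi k i) - h z \<ge> - 2 * Mh" using Mh[OF xik] Mh[OF zX] by linarith
      have C: "fs (Suc i) (x k) - fs (Suc i) (xi k i) \<le> Cf * norm (x k - xi k i)"
        using lipf[of "Suc i" "x k" "xi k i"] im xX by simp
      have C2: "Cf * norm (x k - xi k i) \<le> Cf * (real m * g * E)"
      proof -
        have "norm (x k - xi k i) \<le> real i * g * E" using dist[of i] im by (simp add: norm_minus_commute)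
        also have "\<dots> \<le> real m * g * E" using im g0 E0 by (intro mult_right_mono) auto
        finally show ?thesis using Cf0 by (intro mult_left_mono) auto
      qed
      have ip: "inner (d i) (xi k i - z) = inner (gf k i) (xi k i - z) + (l / real m) * inner (gh k i) (xi k i - z)"
        unfolding d_def by (simp add: inner_add_left)
      have B3: "(l / real m) * inner (gh k i) (xi k i - z) \<ge> (l / real m) * (- 2 * Mh)"
        using B B2 lm0 by (intro mult_left_mono) auto
      have I: "inner (d i) (xi k i - z) \<ge> fs (Suc i) (x k) - fs (Suc i) z - Cf * (real m * g * E) + (l / real m) * (- 2 * Mh)"
        using ip A B3 C C2 by linarith
      have I2: "2 * g * inner (d i) (xi k i - z) \<ge> 2 * g * (fs (Suc i) (x k) - fs (Suc i) z - Cf * (real m * g * E) + (l / real m) * (- 2 * Mh))"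
        using I g0 by (intro mult_left_mono) auto
      have N2: "g\<^sup>2 * (norm (d i))\<^sup>2 \<le> g\<^sup>2 * E\<^sup>2"
        using dn[OF im] by (intro mult_left_mono power_mono) auto
      have "(norm (xi k (Suc i) - z))\<^sup>2 \<le> (norm (xi k i - g *\<^sub>R d i - z))\<^sup>2"
        using xstep[OF im] Pne[OF zX] by (simp add: power_mono)
      also have "\<dots> = (norm ((xi k i - z) - g *\<^sub>R d i))\<^sup>2" by (simp add: algebra_simps)
      also have "\<dots> = (norm (xi k i - z))\<^sup>2 - 2 * g * inner (d i) (xi k i - z) + g\<^sup>2 * (norm (d i))\<^sup>2"
        by (rule norm_sq_step)
      finally have F: "(norm (xi k (Suc i) - z))\<^sup>2 \<le> (norm (xi k i - z))\<^sup>2 - 2 * g * inner (d i) (xi k i - z) + g\<^sup>2 * (norm (d i))\<^sup>2" .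
      have eqT: "2 * g * (fs (Suc i) (x k) - fs (Suc i) z - Cf * (real m * g * E) + (l / real m) * (- 2 * Mh))
          = 2 * g * (fs (Suc i) (x k) - fs (Suc i) z) - (T - g\<^sup>2 * E\<^sup>2)"
        unfolding T_def by (simp add: algebra_simps power2_eq_square)
      show ?thesis using F I2 N2 eqT by linarith
    qed
    have accum: "(norm (xi k n - z))\<^sup>2 \<le> (norm (x k - z))\<^sup>2 - 2 * g * (\<Sum>i<n. fs (Suc i) (x k) - fs (Suc i) z) + real n * T"
      if "n \<le> m" for n
      using that
    proof (induction n)
      case 0 then show ?case using xi0 by simp
    next
      case (Suc n)
      then show ?case using onestep[of n] by (simp add: algebra_simps)
    qed
    have sumf: "(\<Sum>i<m. fs (Suc i) (x k) - fs (Suc i) z) = f (x k) - f z"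
      unfolding f_def sum_subtractf[symmetric] using sum_shift1[where F=fs and n=m] by (simp add: sum_subtractf)
    have main1: "(norm (x (Suc k) - z))\<^sup>2 \<le> (norm (x k - z))\<^sup>2 - 2 * g * (f (x k) - f z) + real m * T"
      using accum[of m] next_iter[of k] sumf by simp
    have ET: "real m * T \<le> 2 * (g\<^sup>2 * Q k + 2 * g * l * Mh)"
    proof -
      have lc: "0 \<le> l * Ch" using l0 Ch0 by simp
      have lcm: "l * Ch / real m \<le> l * Ch"
      proof -
        have "l * Ch * 1 \<le> l * Ch * real m" using lc m by (intro mult_left_mono) auto
        thus ?thesis using m0 by (simp add: divide_le_eq)
      qed
      have E1: "E \<le> Cf + l * Ch" using lcm unfolding E_def by simp
      have E2: "E\<^sup>2 \<le> 2 * (Cf\<^sup>2 + l\<^sup>2 * Ch\<^sup>2)"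
      proof -
        have "(l * Ch / real m)\<^sup>2 \<le> (l * Ch)\<^sup>2"
          using lcm lc by (intro power_mono) auto
        moreover have "E\<^sup>2 \<le> 2 * (Cf\<^sup>2 + (l * Ch / real m)\<^sup>2)"
        proof -
          have sq: "(p + q)\<^sup>2 \<le> 2 * (p\<^sup>2 + q\<^sup>2)" for p q :: real
          proof -
            have "2 * (p\<^sup>2 + q\<^sup>2) - (p + q)\<^sup>2 = (p - q)\<^sup>2" by (simp add: power2_eq_square algebra_simps)
            moreover have "(p - q)\<^sup>2 \<ge> 0" by simp
            ultimately show ?thesis by linarith
          qed
          show ?thesis unfolding E_def using sq[of Cf "l * Ch / real m"] by simp
        qed
        ultimately show ?thesis by (simp add: power_mult_distrib)
      qed
      have t1: "real m * (2 * g\<^sup>2 * Cf * E * real m) \<le> 2 * (g\<^sup>2 * ((real m)\<^sup>2 * Cf * (Cf + l * Ch)))"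
      proof -
        have "Cf * E \<le> Cf * (Cf + l * Ch)" using E1 Cf0 by (intro mult_left_mono)
        hence "(2 * g\<^sup>2 * (real m)\<^sup>2) * (Cf * E) \<le> (2 * g\<^sup>2 * (real m)\<^sup>2) * (Cf * (Cf + l * Ch))"
          by (rule mult_left_mono) auto
        thus ?thesis by (simp add: algebra_simps power2_eq_square)
      qed
      have t2: "real m * (4 * g * l * Mh / real m) = 2 * (2 * g * l * Mh)" using m0 by simp
      have t3: "real m * (g\<^sup>2 * E\<^sup>2) \<le> 2 * (g\<^sup>2 * (real m * (Cf\<^sup>2 + l\<^sup>2 * Ch\<^sup>2)))"
      proof -
        have "(real m * g\<^sup>2) * E\<^sup>2 \<le> (real m * g\<^sup>2) * (2 * (Cf\<^sup>2 + l\<^sup>2 * Ch\<^sup>2))" using E2 by (rule mult_left_mono) auto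
        thus ?thesis by (simp add: algebra_simps)
      qed
      show ?thesis using t1 t2 t3 unfolding T_def Q_def l_def[symmetric]
        by (simp add: algebra_simps)
    qed
    have main2: "g * (f (x k) - f z) \<le> ((norm (x k - z))\<^sup>2 - (norm (x (Suc k) - z))\<^sup>2) / 2 + (g\<^sup>2 * Q k + 2 * g * l * Mh)"
    proof -
      have "2 * g * (f (x k) - f z) = 2 * (g * (f (x k) - f z))" by simp
      have aux: "c \<le> (b - a') / 2 + u" if "a' \<le> b - 2 * c + t" "t \<le> 2 * u" for a' b c t u :: real
        using that by (simp add: field_simps)
      show ?thesis using aux[OF main1[unfolded \<open>2 * g * (f (x k) - f z) = 2 * (g * (f (x k) - f z))\<close>] ET] .
    qed
    have ak: "a k > 0" unfolding a_def using gamma(1)[of k] by simp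
    define Dd where "Dd = (norm (x k - z))\<^sup>2 - (norm (x (Suc k) - z))\<^sup>2"
    have F1: "a k * (g * (f (x k) - f z)) \<le> a k * (Dd / 2 + (g\<^sup>2 * Q k + 2 * g * l * Mh))"
      using main2 ak unfolding Dd_def by (intro mult_left_mono) auto
    have ag: "a k * g = gamma k powr r"
    proof -
      have "a k * g = gamma k powr (r - 1) * gamma k powr 1" unfolding a_def g_def using gamma(1)[of k] by simp
      also have "\<dots> = gamma k powr (r - 1 + 1)" by (rule powr_add[symmetric])
      also have "r - 1 + 1 = r" by simp
      finally show ?thesis .
    qed
    have ag2: "a k * g\<^sup>2 = gamma k powr (r + 1)"
    proof -
      have "g powr 2 = g\<^sup>2" using g0 powr_realpow[of g 2] by simp
      hence "a k * g\<^sup>2 = gamma k powr (r - 1) * gamma k powr 2" unfolding a_def g_def by simp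
      also have "\<dots> = gamma k powr (r - 1 + 2)" by (rule powr_add[symmetric])
      also have "r - 1 + 2 = r + 1" by simp
      finally show ?thesis .
    qed
    have e1: "a k * (g * (f (x k) - f z)) = (a k * g) * (f (x k) - f z)" by (simp only: mult.assoc)
    have e2: "a k * (Dd / 2 + (g\<^sup>2 * Q k + 2 * g * l * Mh)) = a k * Dd / 2 + (a k * g\<^sup>2) * Q k + 2 * Mh * ((a k * g) * l)"
      by (simp add: algebra_simps)
    show ?thesis using F1 unfolding e1 e2 unfolding ag ag2 unfolding Dd_def l_def .
  qed
  have sumk: "(\<Sum>k<N. gamma k powr r * (f (x k) - f z)) \<le> R" if zX: "z \<in> X" for z
  proof -
    have "(\<Sum>k<N. gamma k powr r * (f (x k) - f z)) \<le> (\<Sum>k<N. a k * ((norm (x k - z))\<^sup>2 - (norm (x (Suc k) - z))\<^sup>2) / 2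
       + gamma k powr (r + 1) * Q k + 2 * Mh * (gamma k powr r * lambda k))"
      by (rule sum_mono) (rule perk[OF zX])
    also have "\<dots> = (\<Sum>k<N. a k * ((norm (x k - z))\<^sup>2 - (norm (x (Suc k) - z))\<^sup>2)) / 2
       + (\<Sum>k<N. gamma k powr (r + 1) * Q k) + 2 * Mh * (\<Sum>k<N. gamma k powr r * lambda k)"
      by (simp add: sum.distrib sum_distrib_left sum_divide_distrib)
    also have "(\<Sum>k<N. a k * ((norm (x k - z))\<^sup>2 - (norm (x (Suc k) - z))\<^sup>2)) \<le> a (N - 1) * (4 * M\<^sup>2)"
    proof (rule tele_bound[OF _ _ _ _ N])
      show "\<And>k. 0 \<le> (norm (x k - z))\<^sup>2" by simp
      show "\<And>k. (norm (x k - z))\<^sup>2 \<le> 4 * M\<^sup>2" using Dbound xX zX by blast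
      show "\<And>k. a k \<le> a (Suc k)" unfolding a_def
        using gamma r by (intro powr_mono2') (auto simp: decseq_Suc_iff)
      show "\<And>k. 0 \<le> a k" unfolding a_def by simp
    qed
    also have "(\<Sum>k<N. gamma k powr (r + 1) * Q k) = real m * (\<Sum>k<N. gamma k powr (r + 1) * (Cf\<^sup>2 + (lambda k)\<^sup>2 * Ch\<^sup>2))
              + (real m)\<^sup>2 * Cf * (\<Sum>k<N. gamma k powr (r + 1) * (Cf + lambda k * Ch))"
      unfolding Q_def by (simp add: sum.distrib sum_distrib_left algebra_simps)
    finally show ?thesis unfolding R_def a_def by (simp add: algebra_simps)
  qed
  have S0: "S > 0" unfolding S_def
  proof (rule sum_pos)
    show "finite {..<N}" by simp
    show "{..<N} \<noteq> {}" using N lessThan_empty_iff[of N] by simp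
    fix i show "0 < gamma i powr r" using gamma(1)[of i] by simp
  qed
  have convf: "convex_on UNIV f" unfolding f_def by (rule convex_on_sum_fun[OF fs_convex])
  define xbar where "xbar = (\<Sum>k<N. gamma k powr r *\<^sub>R x k) /\<^sub>R S"
  have xbar': "xbar = (\<Sum>k<N. (gamma k powr r / S) *\<^sub>R x k)"
    unfolding xbar_def by (simp add: scaleR_sum_right divide_inverse_commute)
  have jensen: "f xbar \<le> (\<Sum>k<N. (gamma k powr r / S) * f (x k))"
    unfolding xbar' using N S0
    by (intro convex_on_sum[OF _ _ convf]) (auto simp: S_def sum_divide_distrib[symmetric])
  have bound: "f xbar - R / S \<le> f z" if zX: "z \<in> X" for z
  proof -
    have "f xbar - f z \<le> (\<Sum>k<N. (gamma k powr r / S) * f (x k)) - (\<Sum>k<N. gamma k powr r / S) * f z"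
      using jensen S0 by (simp add: S_def sum_divide_distrib[symmetric])
    also have "\<dots> = (\<Sum>k<N. gamma k powr r * (f (x k) - f z)) / S"
    proof -
      have q1: "(\<Sum>k<N. (gamma k powr r / S) * f (x k)) = (\<Sum>k<N. gamma k powr r * f (x k)) / S"
        by (simp add: sum_divide_distrib)
      have q2: "(\<Sum>k<N. gamma k powr r / S) * f z = (\<Sum>k<N. gamma k powr r * f z) / S"
        by (simp add: sum_divide_distrib sum_distrib_right)
      have q3: "(\<Sum>k<N. gamma k powr r * (f (x k) - f z)) = (\<Sum>k<N. gamma k powr r * f (x k)) - (\<Sum>k<N. gamma k powr r * f z)"
        by (simp add: right_diff_distrib sum_subtractf)
      show ?thesis unfolding q1 q2 q3 by (simp add: diff_divide_distrib)
    qed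
    also have "\<dots> \<le> R / S" using sumk[OF zX] S0 by (simp add: divide_right_mono)
    finally show ?thesis by linarith
  qed
  have "f xbar - R / S \<le> (INF y\<in>X. f y)"
    by (rule cINF_greatest[OF X(1)]) (rule bound)
  hence "f xbar - (INF y\<in>X. f y) \<le> (1 / S) * R" by simp
  thus ?thesis unfolding Let_def f_def[symmetric] S_def[symmetric] xbar_def[symmetric] R_def[symmetric] .
qed

end
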